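(* The map $f \mapsto C^{\wedge}(f)$, defined on the set $\mathbb{N}_0[\mathbb{R} \times \mathbb{R}_{>0}]$ of barcodes, is one-to-one.
   Context: A barcode is a finite formal sum $f = \sum_{i=1}^n x^{\alpha_i}y^{\ell_i}$ with $n\ge 0$, $\alpha_i \in \mathbb{R}$, $\ell_i \in \mathbb{R}_{>0}$ (i.e. a finite multiset of pairs $(\alpha_i,\ell_i)$, written as an element of the monoid semiring $\mathbb{N}_0[\mathbb{R}\times\mathbb{R}_{>0}]$ with indeterminates $x,y$ and real exponents). Its $p$-th exterior power ($p\ge1$) is the barcode $f^{\wedge p} = \sum_{1\le i_1<\cdots<i_p\le n} x^{\alpha_{i_1}+\cdots+\alpha_{i_p}}y^{\min\{\ell_{i_1},\ldots,\ell_{i_p}\}}$ (zero if $p>n$). Set $B(f) = \sum_i x^{\alpha_i}$, $D(f) = \sum_i x^{\alpha_i+\ell_i}$, and the critical series $C(f) = B(f)-D(f) \in \mathbb{Z}[\mathbb{R}]$ (finite integer combinations of $x^g$, $g\in\mathbb{R}$). The exterior critical series of $f$ is $C^{\wedge}(f) = \sum_{p=1}^{\infty} C(f^{\wedge p})z^p$, with $z$ a further indeterminate (a finite sum). *)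

theory Defs
  imports Complex_Main "HOL-Library.Multiset" "HOL-Library.Product_Lexorder"
begin

(* A barcode: finite multiset of bars (alpha, ell) with ell > 0.
   Element of N_0[R x R_{>0}]. *)
type_synonym barcode = "(real \<times> real) multiset"

definition is_barcode :: "barcode \<Rightarrow> bool" where
  "is_barcode f \<longleftrightarrow> (\<forall>b \<in># f. snd b > 0)"

(* p-th exterior power: enumerate the bars of f as a list xs (any enumeration;
   we take the sorted one), and sum over p-element index sets
   {i_1 < ... < i_p} the bar (alpha_{i_1}+...+alpha_{i_p}, min ell_{i_j}). *)
definition ext_pow :: "barcode \<Rightarrow> nat \<Rightarrow> barcode" where
  "ext_pow f p =
     (let xs = sorted_list_of_multiset f in
      \<Sum>S \<in> {S. S \<subseteq> {..<length xs} \<and> card S = p}.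
        {# (\<Sum>i\<in>S. fst (xs ! i), Min ((\<lambda>i. snd (xs ! i)) ` S)) #})"

(* Elements of Z[R] as finitely supported functions real => int
   (coefficient of x^g). *)
definition birth :: "barcode \<Rightarrow> real \<Rightarrow> int" where
  "birth f g = int (count (image_mset fst f) g)"

definition death :: "barcode \<Rightarrow> real \<Rightarrow> int" where
  "death f g = int (count (image_mset (\<lambda>(a, l). a + l) f) g)"

definition crit :: "barcode \<Rightarrow> real \<Rightarrow> int" where
  "crit f g = birth f g - death f g"

(* exterior critical series: coefficient of z^p x^g; the z^0 coefficient is 0 *)
definition ext_crit :: "barcode \<Rightarrow> nat \<Rightarrow> real \<Rightarrow> int" where
  "ext_crit f p g = (if p \<ge> 1 then crit (ext_pow f p) g else 0)"

end

theory Submission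
  imports Defs
begin

definition subs :: "nat set \<Rightarrow> nat \<Rightarrow> nat set set" where
  "subs I p = {S. S \<subseteq> I \<and> card S = p}"
definition sa :: "(nat \<Rightarrow> real \<times> real) \<Rightarrow> nat set \<Rightarrow> real" where
  "sa v S = (\<Sum>i\<in>S. fst (v i))"
definition ml :: "(nat \<Rightarrow> real \<times> real) \<Rightarrow> nat set \<Rightarrow> real" where
  "ml v S = Min ((\<lambda>i. snd (v i)) ` S)"
definition cB :: "real \<Rightarrow> nat set \<Rightarrow> (nat \<Rightarrow> real \<times> real) \<Rightarrow> nat \<Rightarrow> real \<Rightarrow> nat" where
  "cB c I v p x = card {S \<in> subs I p. sa v S + c = x}"
definition cD :: "nat set \<Rightarrow> (nat \<Rightarrow> real \<times> real) \<Rightarrow> nat \<Rightarrow> real \<Rightarrow> nat" where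
  "cD I v p x = card {S \<in> subs I p. sa v S + ml v S = x}"
definition fF :: "real \<Rightarrow> nat set \<Rightarrow> (nat \<Rightarrow> real \<times> real) \<Rightarrow> nat \<Rightarrow> real \<Rightarrow> int" where
  "fF c I v p x = int (cB c I v p x) - int (cD I v p x)"
definition smin :: "nat set \<Rightarrow> (nat \<Rightarrow> real \<times> real) \<Rightarrow> nat \<Rightarrow> real" where
  "smin I v p = Min (sa v ` subs I p)"

lemma finite_subs[simp]: "finite I \<Longrightarrow> finite (subs I p)"
  unfolding subs_def by (rule finite_subset[of _ "Pow I"]) auto

lemma finite_subs_P[simp]: "finite I \<Longrightarrow> finite {S \<in> subs I p. P S}"
  by simp

lemma subs_nonempty: "finite I \<Longrightarrow> p \<le> card I \<Longrightarrow> subs I p \<noteq> {}"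
proof -
  assume "p \<le> card I"
  then obtain T where "T \<subseteq> I" "card T = p" by (rule obtain_subset_with_card_n)
  then have "T \<in> subs I p" unfolding subs_def by simp
  then show ?thesis by blast
qed

lemma subs_big: "finite I \<Longrightarrow> card I < p \<Longrightarrow> subs I p = {}"
proof -
  assume a: "finite I" "card I < p"
  { fix S assume "S \<subseteq> I" "card S = p"
    then have "card S \<le> card I" using a(1) by (intro card_mono)
    then have False using a \<open>card S = p\<close> by simp }
  then show ?thesis unfolding subs_def by blast
qed

lemma subs_full: "finite I \<Longrightarrow> subs I (card I) = {I}"
proof -
  assume a: "finite I"
  { fix S assume "S \<subseteq> I" "card S = card I"
    then have "S = I" using a card_subset_eq by blast }
  then show ?thesis unfolding subs_def by blast
qed

lemma subs_zero: assumes fI: "finite I" shows "subs I 0 = {{}}"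
  unfolding subs_def
proof (rule set_eqI, rule iffI)
  fix S :: "nat set" assume a: "S \<in> {S. S \<subseteq> I \<and> card S = 0}"
  then have "finite S" using fI by (metis (no_types, lifting) finite_subset mem_Collect_eq)
  then show "S \<in> {{}}" using a by simp
next
  fix S :: "nat set" assume "S \<in> {{}}" then show "S \<in> {S. S \<subseteq> I \<and> card S = 0}" by simp
qed

lemma card_split_elem:
  assumes "finite I" "i0 \<in> I" "p \<ge> 1"
  shows "card {S \<in> subs I p. P S} = card {S \<in> subs (I - {i0}) p. P S}
     + card {T \<in> subs (I - {i0}) (p - 1). P (insert i0 T)}"
proof -
  have fin: "finite (I - {i0})" using assms by simp
  have eq: "{S \<in> subs I p. P S} = {S \<in> subs (I - {i0}) p. P S} \<union>
      insert i0 ` {T \<in> subs (I - {i0}) (p - 1). P (insert i0 T)}"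
  proof (rule set_eqI, rule iffI)
    fix S assume S: "S \<in> {S \<in> subs I p. P S}"
    show "S \<in> {S \<in> subs (I - {i0}) p. P S} \<union> insert i0 ` {T \<in> subs (I - {i0}) (p - 1). P (insert i0 T)}"
    proof (cases "i0 \<in> S")
      case True
      have fS: "finite S" using S assms finite_subset unfolding subs_def by auto
      have "S = insert i0 (S - {i0})" using True by auto
      moreover have "S - {i0} \<in> {T \<in> subs (I - {i0}) (p - 1). P (insert i0 T)}"
        using S True fS unfolding subs_def by (auto simp: insert_absorb)
      ultimately show ?thesis by blast
    next
      case False then show ?thesis using S unfolding subs_def by auto
    qed
  next
    fix S assume "S \<in> {S \<in> subs (I - {i0}) p. P S} \<union> insert i0 ` {T \<in> subs (I - {i0}) (p - 1). P (insert i0 T)}"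
    then show "S \<in> {S \<in> subs I p. P S}"
    proof
      assume "S \<in> {S \<in> subs (I - {i0}) p. P S}" then show ?thesis unfolding subs_def by auto
    next
      assume "S \<in> insert i0 ` {T \<in> subs (I - {i0}) (p - 1). P (insert i0 T)}"
      then obtain T where T: "T \<subseteq> I - {i0}" "card T = p - 1" "P (insert i0 T)" "S = insert i0 T"
        unfolding subs_def by auto
      have "finite T" using T fin finite_subset by auto
      moreover have "i0 \<notin> T" using T by auto
      ultimately have "card S = Suc (card T)" using T(4) by simp
      then have "card S = p" using T assms by simp
      then show ?thesis using T assms unfolding subs_def by auto
    qed
  qed
  have disj: "{S \<in> subs (I - {i0}) p. P S} \<inter> insert i0 ` {T \<in> subs (I - {i0}) (p - 1). P (insert i0 T)} = {}"
    unfolding subs_def by auto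
  have inj: "inj_on (insert i0) {T \<in> subs (I - {i0}) (p - 1). P (insert i0 T)}"
    unfolding subs_def inj_on_def by auto
  have f2: "finite (insert i0 ` {T \<in> subs (I - {i0}) (p - 1). P (insert i0 T)})"
    using fin by simp
  have "card {S \<in> subs I p. P S} = card {S \<in> subs (I - {i0}) p. P S} +
      card (insert i0 ` {T \<in> subs (I - {i0}) (p - 1). P (insert i0 T)})"
    unfolding eq by (rule card_Un_disjoint[OF _ f2 disj]) (use fin in simp)
  also have "card (insert i0 ` {T \<in> subs (I - {i0}) (p - 1). P (insert i0 T)}) =
     card {T \<in> subs (I - {i0}) (p - 1). P (insert i0 T)}"
    by (rule card_image[OF inj])
  finally show ?thesis .
qed

lemma card_split_sub:
  assumes "finite I" "U \<subseteq> I"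
  shows "card {S \<in> subs I p. Q S} = card {S \<in> subs U p. Q S} + card {S \<in> subs I p. \<not> S \<subseteq> U \<and> Q S}"
proof -
  have "{S \<in> subs I p. Q S} = {S \<in> subs U p. Q S} \<union> {S \<in> subs I p. \<not> S \<subseteq> U \<and> Q S}"
    using assms unfolding subs_def by auto
  moreover have "{S \<in> subs U p. Q S} \<inter> {S \<in> subs I p. \<not> S \<subseteq> U \<and> Q S} = {}"
    unfolding subs_def by auto
  moreover have "finite U" using assms finite_subset by auto
  ultimately show ?thesis using assms by (simp add: card_Un_disjoint)
qed


lemma smin_props:
  assumes "finite I" "p \<le> card I"
  shows "smin I v p \<in> sa v ` subs I p" "\<And>S. S \<in> subs I p \<Longrightarrow> smin I v p \<le> sa v S"
proof -
  have ne: "sa v ` subs I p \<noteq> {}" using subs_nonempty[OF assms] by simp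
  have fin: "finite (sa v ` subs I p)" using assms by simp
  show "smin I v p \<in> sa v ` subs I p" unfolding smin_def using Min_in[OF fin ne] .
  fix S assume "S \<in> subs I p"
  then show "smin I v p \<le> sa v S" unfolding smin_def using Min_le[OF fin] by simp
qed

lemma subs_ne_elem: "finite I \<Longrightarrow> S \<in> subs I p \<Longrightarrow> 1 \<le> p \<Longrightarrow> finite S \<and> S \<noteq> {}"
  unfolding subs_def by (metis (mono_tags, lifting) card.empty finite_subset mem_Collect_eq not_one_le_zero)

lemma ml_gt:
  assumes "finite I" "S \<in> subs I p" "1 \<le> p" "\<forall>i\<in>I. c < snd (v i)"
  shows "c < ml v S"
proof -
  have "finite S" "S \<noteq> {}" using subs_ne_elem[OF assms(1-3)] by auto
  moreover have "S \<subseteq> I" using assms(2) unfolding subs_def by simp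
  ultimately show ?thesis unfolding ml_def using assms(4) by (subst Min_gr_iff) auto
qed

lemma low:
  assumes fI: "finite I" and p: "1 \<le> p" "p \<le> card I" and c: "\<forall>i\<in>I. c < snd (v i)"
  shows "fF c I v p (c + smin I v p) > 0" "\<And>x. x < c + smin I v p \<Longrightarrow> fF c I v p x = 0"
proof -
  have D0: "cD I v p x = 0" if "x \<le> c + smin I v p" for x
  proof -
    have "{S \<in> subs I p. sa v S + ml v S = x} = {}"
    proof (rule ccontr)
      assume "{S \<in> subs I p. sa v S + ml v S = x} \<noteq> {}"
      then obtain S where S: "S \<in> subs I p" "sa v S + ml v S = x" by blast
      have "c < ml v S" using ml_gt[OF fI S(1) p(1) c] .
      moreover have "smin I v p \<le> sa v S" using smin_props(2)[OF fI p(2) S(1)] .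
      ultimately show False using S(2) that by linarith
    qed
    then show ?thesis unfolding cD_def by (metis card.empty)
  qed
  obtain S0 where S0: "S0 \<in> subs I p" "sa v S0 = smin I v p" using smin_props(1)[OF fI p(2), of v] by force
  have "S0 \<in> {S \<in> subs I p. sa v S + c = c + smin I v p}" using S0 by simp
  then have "cB c I v p (c + smin I v p) > 0" unfolding cB_def
    using fI card_gt_0_iff[of "{S \<in> subs I p. sa v S + c = c + smin I v p}"] by auto
  then show "fF c I v p (c + smin I v p) > 0" unfolding fF_def using D0[of "c + smin I v p"] by simp
  fix x assume x: "x < c + smin I v p"
  have "{S \<in> subs I p. sa v S + c = x} = {}"
  proof (rule ccontr)
    assume "{S \<in> subs I p. sa v S + c = x} \<noteq> {}"
    then obtain S where S: "S \<in> subs I p" "sa v S + c = x" by blast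
    have "smin I v p \<le> sa v S" using smin_props(2)[OF fI p(2) S(1)] .
    then show False using S(2) x by linarith
  qed
  then have "cB c I v p x = 0" unfolding cB_def by (metis card.empty)
  then show "fF c I v p x = 0" unfolding fF_def using D0[of x] x by simp
qed

lemma high: "finite I \<Longrightarrow> card I < p \<Longrightarrow> fF c I v p x = 0"
  unfolding fF_def cB_def cD_def by (simp add: subs_big)

lemma smin1:
  assumes fI: "finite I" and i0: "i0 \<in> I" "\<forall>i\<in>I. fst (v i0) \<le> fst (v i)"
  shows "smin I v 1 = fst (v i0)"
  unfolding smin_def
proof (rule Min_eqI)
  show "finite (sa v ` subs I 1)" using fI by simp
  fix y assume "y \<in> sa v ` subs I 1"
  then obtain S where S: "S \<subseteq> I" "card S = 1" "y = sa v S" unfolding subs_def by auto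
  then obtain i where "S = {i}" by (metis card_1_singletonE)
  then show "fst (v i0) \<le> y" using S i0 unfolding sa_def by auto
next
  have "{i0} \<in> subs I 1" using i0 unfolding subs_def by simp
  moreover have "sa v {i0} = fst (v i0)" unfolding sa_def by simp
  ultimately show "fst (v i0) \<in> sa v ` subs I 1" by (metis image_eqI)
qed

lemma smin_rec:
  assumes fI: "finite I" and i0: "i0 \<in> I" "\<forall>i\<in>I. fst (v i0) \<le> fst (v i)"
    and p: "2 \<le> p" "p \<le> card I"
  shows "smin I v p = fst (v i0) + smin (I - {i0}) v (p - 1)"
  unfolding smin_def[of I]
proof (rule Min_eqI)
  have fI': "finite (I - {i0})" using fI by simp
  have cI': "p - 1 \<le> card (I - {i0})" using p i0 fI by simp
  show "finite (sa v ` subs I p)" using fI by simp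
  fix y assume "y \<in> sa v ` subs I p"
  then obtain S where S: "S \<in> subs I p" "y = sa v S" by auto
  have fS: "finite S" "S \<noteq> {}" using subs_ne_elem[OF fI S(1)] p by auto
  have SI: "S \<subseteq> I" "card S = p" using S(1) unfolding subs_def by auto
  show "fst (v i0) + smin (I - {i0}) v (p - 1) \<le> y"
  proof (cases "i0 \<in> S")
    case True
    have "S - {i0} \<in> subs (I - {i0}) (p - 1)" using SI True fS unfolding subs_def by auto
    then have "smin (I - {i0}) v (p - 1) \<le> sa v (S - {i0})" using smin_props(2)[OF fI' cI'] by blast
    moreover have "sa v S = fst (v i0) + sa v (S - {i0})" unfolding sa_def using True fS(1)
      by (simp add: sum.remove)
    ultimately show ?thesis using S(2) by simp
  next
    case False
    obtain j where j: "j \<in> S" using fS by blast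
    have "S - {j} \<in> subs (I - {i0}) (p - 1)" using SI False fS j unfolding subs_def by auto
    then have "smin (I - {i0}) v (p - 1) \<le> sa v (S - {j})" using smin_props(2)[OF fI' cI'] by blast
    moreover have "sa v S = fst (v j) + sa v (S - {j})" unfolding sa_def using j fS(1)
      by (simp add: sum.remove)
    moreover have "fst (v i0) \<le> fst (v j)" using i0 j SI by auto
    ultimately show ?thesis using S(2) by simp
  qed
next
  have fI': "finite (I - {i0})" using fI by simp
  have cI': "p - 1 \<le> card (I - {i0})" using p i0 fI by simp
  obtain T where T: "T \<in> subs (I - {i0}) (p - 1)" "sa v T = smin (I - {i0}) v (p - 1)"
    using smin_props(1)[OF fI' cI', of v] by force
  have TI: "T \<subseteq> I - {i0}" "card T = p - 1" using T(1) unfolding subs_def by auto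
  have fT: "finite T" using TI fI' finite_subset by blast
  have "i0 \<notin> T" using TI by auto
  then have "card (insert i0 T) = p" using fT TI p by simp
  then have "insert i0 T \<in> subs I p" using TI i0 unfolding subs_def by auto
  moreover have "sa v (insert i0 T) = fst (v i0) + sa v T" unfolding sa_def using fT \<open>i0 \<notin> T\<close> by simp
  ultimately show "fst (v i0) + smin (I - {i0}) v (p - 1) \<in> sa v ` subs I p" using T(2) by (metis image_eqI)
qed


lemma argmin_ex:
  fixes f :: "nat \<Rightarrow> real"
  assumes "finite I" "I \<noteq> {}"
  obtains i0 where "i0 \<in> I" "\<forall>i\<in>I. f i0 \<le> f i"
proof -
  have "Min (f ` I) \<in> f ` I" using assms by simp
  then obtain i0 where "i0 \<in> I" "f i0 = Min (f ` I)" by (metis imageE)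
  moreover have "\<forall>i\<in>I. Min (f ` I) \<le> f i" using assms by simp
  ultimately show ?thesis using that by metis
qed

lemma K:
  assumes "finite I" "finite I'" "card I = card I'"
    "\<forall>p. 1 \<le> p \<and> p \<le> card I \<longrightarrow> smin I v p = smin I' v' p"
  shows "image_mset (\<lambda>i. fst (v i)) (mset_set I) = image_mset (\<lambda>i. fst (v' i)) (mset_set I')"
  using assms
proof (induction "card I" arbitrary: I I')
  case 0
  then have "I = {}" "I' = {}" by auto
  then show ?case by simp
next
  case (Suc n)
  have ne: "I \<noteq> {}" "I' \<noteq> {}" using Suc.hyps(2) Suc.prems(3) by auto
  obtain i0 where i0: "i0 \<in> I" "\<forall>i\<in>I. fst (v i0) \<le> fst (v i)"
    using argmin_ex[OF Suc.prems(1) ne(1), of "\<lambda>i. fst (v i)"] by blast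
  obtain i1 where i1: "i1 \<in> I'" "\<forall>i\<in>I'. fst (v' i1) \<le> fst (v' i)"
    using argmin_ex[OF Suc.prems(2) ne(2), of "\<lambda>i. fst (v' i)"] by blast
  have a: "fst (v i0) = fst (v' i1)"
    using smin1[OF Suc.prems(1) i0] smin1[OF Suc.prems(2) i1] Suc.prems(4) Suc.hyps(2) by fastforce
  have cJ: "n = card (I - {i0})" "card (I - {i0}) = card (I' - {i1})"
    using Suc.hyps(2) Suc.prems i0 i1 by auto
  have sm: "\<forall>q. 1 \<le> q \<and> q \<le> card (I - {i0}) \<longrightarrow> smin (I - {i0}) v q = smin (I' - {i1}) v' q"
  proof (intro allI impI)
    fix q assume q: "1 \<le> q \<and> q \<le> card (I - {i0})"
    have r1: "smin I v (Suc q) = fst (v i0) + smin (I - {i0}) v q"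
      using smin_rec[OF Suc.prems(1) i0, of "Suc q"] q cJ Suc.hyps(2) by simp
    have r2: "smin I' v' (Suc q) = fst (v' i1) + smin (I' - {i1}) v' q"
      using smin_rec[OF Suc.prems(2) i1, of "Suc q"] q cJ Suc.hyps(2) Suc.prems(3) by simp
    have "smin I v (Suc q) = smin I' v' (Suc q)" using Suc.prems(4) q cJ Suc.hyps(2) by simp
    then show "smin (I - {i0}) v q = smin (I' - {i1}) v' q" using r1 r2 a by simp
  qed
  have IH: "image_mset (\<lambda>i. fst (v i)) (mset_set (I - {i0})) = image_mset (\<lambda>i. fst (v' i)) (mset_set (I' - {i1}))"
    using Suc.hyps(1)[OF cJ(1) _ _ cJ(2) sm] Suc.prems by simp
  have "mset_set I = add_mset i0 (mset_set (I - {i0}))" using mset_set.remove[OF Suc.prems(1) i0(1)] .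
  moreover have "mset_set I' = add_mset i1 (mset_set (I' - {i1}))" using mset_set.remove[OF Suc.prems(2) i1(1)] .
  ultimately show ?case using IH a by simp
qed

lemma cB_split:
  assumes "finite I" "i0 \<in> I" "1 \<le> p"
  shows "cB c I v p x = cB c (I - {i0}) v p x + cB c (I - {i0}) v (p - 1) (x - fst (v i0))"
proof -
  have "cB c I v p x = card {S \<in> subs (I - {i0}) p. sa v S + c = x}
     + card {T \<in> subs (I - {i0}) (p - 1). sa v (insert i0 T) + c = x}"
    unfolding cB_def by (rule card_split_elem[OF assms])
  also have "{T \<in> subs (I - {i0}) (p - 1). sa v (insert i0 T) + c = x}
     = {T \<in> subs (I - {i0}) (p - 1). sa v T + c = x - fst (v i0)}"
  proof (rule Collect_cong, rule conj_cong)
    fix T show "(T \<in> subs (I - {i0}) (p - 1)) = (T \<in> subs (I - {i0}) (p - 1))" by simp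
    assume T: "T \<in> subs (I - {i0}) (p - 1)"
    then have "finite T" "i0 \<notin> T" unfolding subs_def using assms(1) finite_subset by auto
    then have "sa v (insert i0 T) = fst (v i0) + sa v T" unfolding sa_def by simp
    then show "(sa v (insert i0 T) + c = x) = (sa v T + c = x - fst (v i0))" by linarith
  qed
  finally show ?thesis unfolding cB_def .
qed

lemma cB_zero: assumes "finite J" shows "cB c J w 0 x = (if c = x then 1 else 0)"
proof -
  have "{S \<in> subs J 0. sa w S + c = x} = (if c = x then {{}} else {})"
    unfolding subs_zero[OF assms] by (auto simp: sa_def)
  then show ?thesis unfolding cB_def by simp
qed

lemma B:
  assumes "finite I" "finite I'"
    "image_mset (\<lambda>i. fst (v i)) (mset_set I) = image_mset (\<lambda>i. fst (v' i)) (mset_set I')"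
  shows "cB c I v p x = cB c I' v' p x"
  using assms
proof (induction "card I" arbitrary: I I' p x)
  case 0
  then have "I = {}" by simp
  then have "mset_set I' = {#}" using 0 by simp
  then have "I' = {}" using 0(3) by (simp add: mset_set_empty_iff)
  then show ?case using \<open>I = {}\<close> unfolding cB_def subs_def sa_def
    by (intro arg_cong[where f=card] Collect_cong) auto
next
  case (Suc n)
  have ne: "I \<noteq> {}" using Suc.hyps(2) by auto
  then obtain i0 where i0: "i0 \<in> I" by blast
  have e1: "mset_set I = add_mset i0 (mset_set (I - {i0}))" using mset_set.remove[OF Suc.prems(1) i0] .
  have "fst (v i0) \<in># image_mset (\<lambda>i. fst (v i)) (mset_set I)"
    using e1 by simp
  then have "fst (v i0) \<in># image_mset (\<lambda>i. fst (v' i)) (mset_set I')"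
    using Suc.prems(3) by simp
  then obtain i1 where "i1 \<in># mset_set I'" "fst (v' i1) = fst (v i0)" by (metis imageE set_image_mset)
  then have i1: "i1 \<in> I'" "fst (v' i1) = fst (v i0)" using Suc.prems(2) by simp_all
  have e2: "mset_set I' = add_mset i1 (mset_set (I' - {i1}))" using mset_set.remove[OF Suc.prems(2) i1(1)] .
  have img: "image_mset (\<lambda>i. fst (v i)) (mset_set (I - {i0})) = image_mset (\<lambda>i. fst (v' i)) (mset_set (I' - {i1}))"
    using Suc.prems(3) e1 e2 i1(2) by simp
  have cJ: "n = card (I - {i0})" using Suc.hyps(2) Suc.prems(1) i0 by simp
  have IH: "\<And>p x. cB c (I - {i0}) v p x = cB c (I' - {i1}) v' p x"
    using Suc.hyps(1)[OF cJ _ _ img] Suc.prems(1,2) by blast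
  show ?case
  proof (cases "p = 0")
    case True
    then show ?thesis using cB_zero[OF Suc.prems(1)] cB_zero[OF Suc.prems(2)] by simp
  next
    case False
    then have p: "1 \<le> p" by simp
    have "cB c I v p x = cB c (I' - {i1}) v' p x + cB c (I' - {i1}) v' (p - 1) (x - fst (v' i1))"
      unfolding cB_split[OF Suc.prems(1) i0 p] IH i1(2) ..
    then show ?thesis unfolding cB_split[OF Suc.prems(2) i1(1) p] .
  qed
qed

lemma L:
  assumes fin: "finite I" "finite I'" and c: "\<forall>i\<in>I. c < snd (v i)" "\<forall>i\<in>I'. c < snd (v' i)"
    and eq: "\<And>p x. 1 \<le> p \<Longrightarrow> fF c I v p x = fF c I' v' p x"
  shows "card I = card I'"
    "image_mset (\<lambda>i. fst (v i)) (mset_set I) = image_mset (\<lambda>i. fst (v' i)) (mset_set I')"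
proof -
  have n1: "\<not> card I < card I'"
  proof
    assume lt: "card I < card I'"
    have "fF c I' v' (card I') (c + smin I' v' (card I')) > 0" using low(1)[OF fin(2) _ _ c(2)] lt by simp
    moreover have "fF c I v (card I') (c + smin I' v' (card I')) = 0" using high[OF fin(1) lt] .
    ultimately show False using eq[of "card I'"] lt by simp
  qed
  have n2: "\<not> card I' < card I"
  proof
    assume lt: "card I' < card I"
    have "fF c I v (card I) (c + smin I v (card I)) > 0" using low(1)[OF fin(1) _ _ c(1)] lt by simp
    moreover have "fF c I' v' (card I) (c + smin I v (card I)) = 0" using high[OF fin(2) lt] .
    ultimately show False using eq[of "card I"] lt by simp
  qed
  show cd: "card I = card I'" using n1 n2 by simp
  have "\<forall>p. 1 \<le> p \<and> p \<le> card I \<longrightarrow> smin I v p = smin I' v' p"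
  proof (intro allI impI)
    fix p assume p: "1 \<le> p \<and> p \<le> card I"
    have p': "p \<le> card I'" using p cd by simp
    have m1: "\<not> smin I v p < smin I' v' p"
    proof
      assume "smin I v p < smin I' v' p"
      then have "fF c I' v' p (c + smin I v p) = 0" using low(2)[OF fin(2) _ p' c(2)] p by simp
      moreover have "fF c I v p (c + smin I v p) > 0" using low(1)[OF fin(1) _ _ c(1)] p by simp
      ultimately show False using eq[of p] p by simp
    qed
    have m2: "\<not> smin I' v' p < smin I v p"
    proof
      assume "smin I' v' p < smin I v p"
      then have "fF c I v p (c + smin I' v' p) = 0" using low(2)[OF fin(1) _ _ c(1)] p by simp
      moreover have "fF c I' v' p (c + smin I' v' p) > 0" using low(1)[OF fin(2) _ p' c(2)] p by simp
      ultimately show False using eq[of p] p by simp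
    qed
    show "smin I v p = smin I' v' p" using m1 m2 by simp
  qed
  then show "image_mset (\<lambda>i. fst (v i)) (mset_set I) = image_mset (\<lambda>i. fst (v' i)) (mset_set I')"
    using K[OF fin cd] by simp
qed


lemma cD_full: assumes "finite I"
  shows "cD I v (card I) x = (if sa v I + ml v I = x then 1 else 0)"
proof -
  have "{S \<in> subs I (card I). sa v S + ml v S = x} = (if sa v I + ml v I = x then {I} else {})"
    unfolding subs_full[OF assms] by auto
  then show ?thesis unfolding cD_def by simp
qed

lemma Esplit:
  assumes fI: "finite I" and U: "U = {i \<in> I. ml v I < snd (v i)}"
  shows "int (cD I v p x) - int (cB (ml v I) I v p x) = int (cD U v p x) - int (cB (ml v I) U v p x)"
proof -
  have UI: "U \<subseteq> I" using U by auto
  have eq: "{S \<in> subs I p. \<not> S \<subseteq> U \<and> sa v S + ml v S = x} = {S \<in> subs I p. \<not> S \<subseteq> U \<and> sa v S + ml v I = x}"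
  proof (rule Collect_cong)
    fix S
    show "(S \<in> subs I p \<and> \<not> S \<subseteq> U \<and> sa v S + ml v S = x) = (S \<in> subs I p \<and> \<not> S \<subseteq> U \<and> sa v S + ml v I = x)"
    proof (cases "S \<in> subs I p \<and> \<not> S \<subseteq> U")
      case True
      then have SI: "S \<subseteq> I" unfolding subs_def by simp
      have fS: "finite S" using SI fI finite_subset by blast
      obtain j where j: "j \<in> S" "j \<notin> U" using True by blast
      have jI: "j \<in> I" using j SI by auto
      have le: "\<forall>i\<in>I. ml v I \<le> snd (v i)" unfolding ml_def using fI by simp
      have "snd (v j) = ml v I" using j jI le U by force
      then have "ml v S = ml v I" unfolding ml_def
        using fS j(1) le SI by (intro Min_eqI) (auto simp: ml_def, metis image_eqI)
      then show ?thesis by simp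
    next
      case False then show ?thesis by blast
    qed
  qed
  have d: "cD I v p x = cD U v p x + card {S \<in> subs I p. \<not> S \<subseteq> U \<and> sa v S + ml v S = x}"
    unfolding cD_def by (rule card_split_sub[OF fI UI])
  have b: "cB (ml v I) I v p x = cB (ml v I) U v p x + card {S \<in> subs I p. \<not> S \<subseteq> U \<and> sa v S + ml v I = x}"
    unfolding cB_def by (rule card_split_sub[OF fI UI])
  show ?thesis using d b eq by simp
qed

lemma assemble:
  fixes v :: "nat \<Rightarrow> real \<times> real"
  assumes fI: "finite I" and U: "U = {i \<in> I. m < snd (v i)}" and le: "\<forall>i\<in>I. m \<le> snd (v i)"
  shows "image_mset v (mset_set I) = image_mset v (mset_set U) + image_mset (\<lambda>a. (a, m))
     (image_mset (\<lambda>i. fst (v i)) (mset_set I) - image_mset (\<lambda>i. fst (v i)) (mset_set U))"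
proof -
  have UI: "U \<subseteq> I" using U by auto
  have fU: "finite U" using UI fI finite_subset by blast
  have split: "mset_set I = mset_set U + mset_set (I - U)"
    using mset_set_Union[OF fU _, of "I - U"] fI UI by (simp add: Un_absorb1 Un_Diff_cancel)
  have "image_mset v (mset_set (I - U)) = image_mset (\<lambda>i. (fst (v i), m)) (mset_set (I - U))"
  proof (rule image_mset_cong)
    fix i assume "i \<in># mset_set (I - U)"
    then have "i \<in> I - U" using fI by simp
    then have "i \<in> I" "\<not> m < snd (v i)" using U by auto
    then have "snd (v i) = m" using le by force
    then show "v i = (fst (v i), m)" by (metis prod.collapse)
  qed
  also have "\<dots> = image_mset (\<lambda>a. (a, m)) (image_mset (\<lambda>i. fst (v i)) (mset_set (I - U)))"
    by (simp add: image_mset.compositionality o_def)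
  also have "image_mset (\<lambda>i. fst (v i)) (mset_set (I - U)) =
     image_mset (\<lambda>i. fst (v i)) (mset_set I) - image_mset (\<lambda>i. fst (v i)) (mset_set U)"
    unfolding split by simp
  finally show ?thesis unfolding split[of ] by simp
qed


lemma M:
  assumes "finite I" "finite I'" "\<forall>i\<in>I. 0 < snd (v i)" "\<forall>i\<in>I'. 0 < snd (v' i)"
    "\<And>p x. 1 \<le> p \<Longrightarrow> fF 0 I v p x = fF 0 I' v' p x"
  shows "image_mset v (mset_set I) = image_mset v' (mset_set I')"
  using assms
proof (induction "card I" arbitrary: I I' v v' rule: less_induct)
  case less
  note fin = less.prems(1,2)
  have cd: "card I = card I'" and img: "image_mset (\<lambda>i. fst (v i)) (mset_set I) = image_mset (\<lambda>i. fst (v' i)) (mset_set I')"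
    using L[OF fin less.prems(3,4)] less.prems(5) by auto
  show ?case
  proof (cases "I = {}")
    case True
    then have "I' = {}" using cd fin by simp
    then show ?thesis using True by simp
  next
    case False
    have ne': "I' \<noteq> {}" using False cd fin by auto
    have Beq: "\<And>c p x. cB c I v p x = cB c I' v' p x" using B[OF fin img] .
    have Deq: "\<And>p x. 1 \<le> p \<Longrightarrow> cD I v p x = cD I' v' p x"
      using less.prems(5) Beq unfolding fF_def by (metis diff_left_imp_eq of_nat_eq_iff)
    define m where "m = ml v I"
    define m' where "m' = ml v' I'"
    have sa_eq: "sa v I = sa v' I'" unfolding sa_def sum_unfold_sum_mset
      using img by (metis image_mset.comp o_def)
    have n1: "1 \<le> card I" using False fin by (simp add: Suc_leI card_gt_0_iff)
    have "cD I v (card I) (sa v I + m) = 1" unfolding m_def cD_full[OF fin(1)] by simp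
    then have "cD I' v' (card I') (sa v I + m) = 1" using Deq[OF n1] cd by simp
    then have "sa v' I' + m' = sa v I + m" unfolding m'_def cD_full[OF fin(2)] by (simp split: if_splits)
    then have mm: "m' = m" using sa_eq by simp
    define U where "U = {i \<in> I. m < snd (v i)}"
    define U' where "U' = {i \<in> I'. m < snd (v' i)}"
    have fU: "finite U" "finite U'" using fin unfolding U_def U'_def by auto
    have E1: "\<And>p x. int (cD I v p x) - int (cB m I v p x) = int (cD U v p x) - int (cB m U v p x)"
      unfolding m_def U_def by (rule Esplit[OF fin(1)]) (simp add: m_def)
    have E2: "\<And>p x. int (cD I' v' p x) - int (cB m I' v' p x) = int (cD U' v' p x) - int (cB m U' v' p x)"
      unfolding mm[symmetric] m'_def U'_def by (rule Esplit[OF fin(2)]) (simp add: m'_def mm)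
    have Feq: "\<And>p x. 1 \<le> p \<Longrightarrow> fF m U v p x = fF m U' v' p x"
    proof -
      fix p :: nat and x :: real assume p: "1 \<le> p"
      have "int (cD U v p x) - int (cB m U v p x) = int (cD U' v' p x) - int (cB m U' v' p x)"
        using E1[of p x] E2[of p x] Deq[OF p, of x] Beq[of m p x] by simp
      then show "fF m U v p x = fF m U' v' p x" unfolding fF_def by simp
    qed
    have cU: "\<forall>i\<in>U. m < snd (v i)" "\<forall>i\<in>U'. m < snd (v' i)" unfolding U_def U'_def by auto
    have imgU: "image_mset (\<lambda>i. fst (v i)) (mset_set U) = image_mset (\<lambda>i. fst (v' i)) (mset_set U')"
      using L(2)[OF fU cU Feq] .
    have BU: "\<And>c p x. cB c U v p x = cB c U' v' p x" using B[OF fU imgU] .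
    have F0: "\<And>p x. 1 \<le> p \<Longrightarrow> fF 0 U v p x = fF 0 U' v' p x"
    proof -
      fix p :: nat and x :: real assume p: "1 \<le> p"
      have "int (cD U v p x) = int (cD U' v' p x)" using Feq[OF p, of x] BU[of m p x] unfolding fF_def by simp
      then show "fF 0 U v p x = fF 0 U' v' p x" unfolding fF_def using BU[of 0 p x] by simp
    qed
    obtain i where i: "i \<in> I" "snd (v i) = m"
    proof -
      have "m \<in> (\<lambda>i. snd (v i)) ` I" unfolding m_def ml_def using fin(1) False by simp
      then show ?thesis using that by blast
    qed
    have "U \<subset> I" using i unfolding U_def by auto
    then have lt: "card U < card I" using fin(1) by (simp add: psubset_card_mono)
    have pos: "\<forall>i\<in>U. 0 < snd (v i)" "\<forall>i\<in>U'. 0 < snd (v' i)"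
      using less.prems(3,4) unfolding U_def U'_def by auto
    have IH: "image_mset v (mset_set U) = image_mset v' (mset_set U')"
      using less.hyps[OF lt fU pos F0] .
    have le: "\<forall>i\<in>I. m \<le> snd (v i)" unfolding m_def ml_def using fin(1) by simp
    have le': "\<forall>i\<in>I'. m \<le> snd (v' i)" unfolding mm[symmetric] m'_def ml_def using fin(2) by simp
    show ?thesis
      using assemble[OF fin(1) U_def le] assemble[OF fin(2) U'_def le'] IH img imgU by simp
  qed
qed


lemma count_sum_single:
  assumes "finite A"
  shows "count (image_mset g (\<Sum>S\<in>A. {#h S#})) y = card {S \<in> A. g (h S) = y}"
  using assms
proof (induction A rule: finite_induct)
  case empty then show ?case by simp
next
  case (insert a A)
  have "{S \<in> insert a A. g (h S) = y} = (if g (h a) = y then insert a {S \<in> A. g (h S) = y} else {S \<in> A. g (h S) = y})"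
    by auto
  then show ?case using insert by simp
qed

lemma link:
  fixes f :: barcode
  defines "xs \<equiv> sorted_list_of_multiset f"
  shows "crit (ext_pow f p) x = fF 0 {..<length xs} (\<lambda>i. xs ! i) p x"
proof -
  have e: "ext_pow f p = (\<Sum>S\<in>subs {..<length xs} p. {#(sa (\<lambda>i. xs ! i) S, ml (\<lambda>i. xs ! i) S)#})"
    unfolding ext_pow_def xs_def subs_def sa_def ml_def Let_def by simp
  have fs: "finite (subs {..<length xs} p)" by simp
  have b: "birth (ext_pow f p) x = int (cB 0 {..<length xs} (\<lambda>i. xs ! i) p x)"
    unfolding birth_def e count_sum_single[OF fs] cB_def by simp
  have d: "death (ext_pow f p) x = int (cD {..<length xs} (\<lambda>i. xs ! i) p x)"
    unfolding death_def e count_sum_single[OF fs] cD_def by simp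
  show ?thesis unfolding crit_def fF_def b d ..
qed

lemma mset_nth: "image_mset (\<lambda>i. xs ! i) (mset_set {..<length xs}) = mset xs"
proof -
  have "image_mset (\<lambda>i. xs ! i) (mset_set {..<length xs}) = mset (map (\<lambda>i. xs ! i) [0..<length xs])"
    unfolding mset_set_upto_eq_mset_upto by simp
  also have "map (\<lambda>i. xs ! i) [0..<length xs] = xs" by (rule map_nth)
  finally show ?thesis .
qed

theorem theorem7:
  shows "inj_on ext_crit {f. is_barcode f}"
proof (rule inj_onI)
  fix f f' assume f: "f \<in> {f. is_barcode f}" and f': "f' \<in> {f. is_barcode f}" and eq: "ext_crit f = ext_crit f'"
  define xs where "xs = sorted_list_of_multiset f"
  define xs' where "xs' = sorted_list_of_multiset f'"
  have pos: "\<forall>i\<in>{..<length xs}. 0 < snd (xs ! i)"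
  proof
    fix i assume "i \<in> {..<length xs}"
    then have "xs ! i \<in> set xs" by simp
    then have "xs ! i \<in># f" unfolding xs_def by (metis mset_sorted_list_of_multiset set_mset_mset)
    then show "0 < snd (xs ! i)" using f unfolding is_barcode_def by simp
  qed
  have pos': "\<forall>i\<in>{..<length xs'}. 0 < snd (xs' ! i)"
  proof
    fix i assume "i \<in> {..<length xs'}"
    then have "xs' ! i \<in> set xs'" by simp
    then have "xs' ! i \<in># f'" unfolding xs'_def by (metis mset_sorted_list_of_multiset set_mset_mset)
    then show "0 < snd (xs' ! i)" using f' unfolding is_barcode_def by simp
  qed
  have F: "\<And>p x. 1 \<le> p \<Longrightarrow> fF 0 {..<length xs} (\<lambda>i. xs ! i) p x = fF 0 {..<length xs'} (\<lambda>i. xs' ! i) p x"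
  proof -
    fix p :: nat and x :: real assume p: "1 \<le> p"
    have "ext_crit f p x = ext_crit f' p x" using eq by simp
    then have "crit (ext_pow f p) x = crit (ext_pow f' p) x" using p unfolding ext_crit_def by simp
    then show "fF 0 {..<length xs} (\<lambda>i. xs ! i) p x = fF 0 {..<length xs'} (\<lambda>i. xs' ! i) p x"
      unfolding xs_def xs'_def link .
  qed
  have "image_mset (\<lambda>i. xs ! i) (mset_set {..<length xs}) = image_mset (\<lambda>i. xs' ! i) (mset_set {..<length xs'})"
    by (rule M[OF _ _ pos pos' F]) simp_all
  then show "f = f'" unfolding mset_nth xs_def xs'_def by simp
qed

end
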